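(* Let $t\ge1$ be an integer, $N=\frac{t(t-1)}{2}$, let $(\theta_1,\dots,\theta_t)\in\mathbb{R}^t$, and let $p_1<p_2<\cdots<p_{N+1}$ be $N+1$ prime numbers; set $p_0:=1$. Then there is at least one $l\in\{1,\dots,N+1\}$ such that $$\min_{\substack{1\le i\le j\le t\\ k\in\mathbb{Z},\ p_l\nmid k}}\left|\,|\theta_i-\theta_j|-\frac{k}{p_l}\right|\ \ge\ \frac{1}{2p_{N}p_{N+1}}.$$ *)

theory Defs
  imports Complex_Main "HOL-Computational_Algebra.Primes"
begin

end

theory Submission
  imports Defs
begin

lemma key:
  fixes a b :: nat and x d :: real and k k' :: int
  assumes pa: "prime a" and pb: "prime b" and ab: "a \<noteq> b"
    and nk: "\<not> int a dvd k" and h1: "\<bar>x - k / a\<bar> < d" and h2: "\<bar>x - k' / b\<bar> < d"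
    and dd: "2 * d * a * b \<le> 1"
  shows False
proof -
  have a0: "a > 0" "b > 0" using pa pb prime_gt_0_nat by auto
  have ne: "k * int b - k' * int a \<noteq> 0"
  proof
    assume "k * int b - k' * int a = 0"
    hence "int a dvd k * int b" by (metis dvd_triv_right eq_iff_diff_eq_0)
    moreover have "prime (int a)" using pa by simp
    moreover have "\<not> int a dvd int b" using pa pb ab primes_dvd_imp_eq by (metis int_dvd_int_iff)
    ultimately show False using nk prime_dvd_mult_iff by blast
  qed
  hence ge: "\<bar>real_of_int (k * int b - k' * int a)\<bar> \<ge> 1" by linarith
  have eq: "k / a - k' / b = real_of_int (k * int b - k' * int a) / (a * b)"
    using a0 by (simp add: field_simps)
  have "\<bar>k / a - k' / b\<bar> < 2 * d" using h1 h2 by linarith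
  hence "\<bar>real_of_int (k * int b - k' * int a)\<bar> / (real a * real b) < 2 * d" using eq a0 by (simp only: abs_divide of_nat_mult) (simp add: abs_mult)
  hence "\<bar>real_of_int (k * int b - k' * int a)\<bar> < 2 * d * (real a * real b)" using a0 by (simp add: pos_divide_less_eq)
  thus False using ge dd by (simp add: mult.assoc)
qed

lemma card_pairs: "card {(i::nat,j). 1\<le>i \<and> i<j \<and> j\<le>t} * 2 = t * (t - 1)"
proof (induction t)
  case 0 then show ?case by (simp add: card_eq_0_iff)
next
  case (Suc t)
  have e: "{(i::nat,j). 1\<le>i \<and> i<j \<and> j\<le>Suc t} = {(i,j). 1\<le>i \<and> i<j \<and> j\<le>t} \<union> (\<lambda>i. (i, Suc t)) ` {1..t}"
    by (auto simp: le_Suc_eq)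
  have f: "finite {(i::nat,j). 1\<le>i \<and> i<j \<and> j\<le>t}"
    by (rule finite_subset[of _ "{..t} \<times> {..t}"]) auto
  have "card {(i::nat,j). 1\<le>i \<and> i<j \<and> j\<le>Suc t} = card {(i::nat,j). 1\<le>i \<and> i<j \<and> j\<le>t} + t"
    unfolding e by (subst card_Un_disjoint[OF f]) (auto simp: card_image inj_on_def)
  then show ?case using Suc by (cases t) (auto simp: algebra_simps)
qed


theorem lemma4:
  fixes t N :: nat and \<theta> :: "nat \<Rightarrow> real" and p :: "nat \<Rightarrow> nat"
  assumes "t \<ge> 1"
    and "N = t * (t - 1) div 2"
    and "\<forall>l\<in>{1..N+1}. prime (p l)"
    and "\<forall>a\<in>{1..N+1}. \<forall>b\<in>{1..N+1}. a < b \<longrightarrow> p a < p b"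
    and "p 0 = 1"
  shows "\<exists>l\<in>{1..N+1}. \<forall>i\<in>{1..t}. \<forall>j\<in>{i..t}. \<forall>k::int.
           \<not> (int (p l) dvd k) \<longrightarrow>
           \<bar>\<bar>\<theta> i - \<theta> j\<bar> - real_of_int k / real (p l)\<bar>
             \<ge> 1 / (2 * real (p N) * real (p (N+1)))"
proof (rule ccontr)
  assume H: "\<not> ?thesis"
  define d where "d = 1 / (2 * real (p N) * real (p (N+1)))"
  have pr: "prime (p l)" if "l \<in> {1..N+1}" for l using assms(3) that by blast
  have pos: "p l > 0" if "l \<in> {1..N+1}" for l using pr[OF that] prime_gt_0_nat by blast
  have pN: "p N \<ge> 1"
  proof (cases "N = 0")
    case True then show ?thesis using assms(5) by simp
  next
    case False then show ?thesis using pos[of N] by simp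
  qed
  have pN1: "p (N+1) \<ge> 1" using pos[of "N+1"] by simp
  have mono: "p l \<le> p N" if "l \<in> {1..N}" for l
  proof (cases "l = N")
    case False
    hence "l < N" "l \<in> {1..N+1}" "N \<in> {1..N+1}" using that by auto
    then show ?thesis using assms(4) by (meson less_imp_le)
  qed simp
  have mono1: "p l \<le> p (N+1)" if "l \<in> {1..N+1}" for l
  proof (cases "l = N+1")
    case False
    hence "l < N+1" "N+1 \<in> {1..N+1}" using that by auto
    then show ?thesis using assms(4) that by (meson less_imp_le)
  qed simp
  have dpos: "d > 0" unfolding d_def using pN pN1 by simp
  have bad: "\<exists>ij. 1 \<le> fst ij \<and> fst ij < snd ij \<and> snd ij \<le> t \<and> (\<exists>k::int. \<not> int (p l) dvd k \<and>
      \<bar>\<bar>\<theta> (fst ij) - \<theta> (snd ij)\<bar> - real_of_int k / real (p l)\<bar> < d)" if l: "l \<in> {1..N+1}" for l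
  proof -
    obtain i j k where ij: "i \<in> {1..t}" "j \<in> {i..t}" "\<not> int (p l) dvd k"
      "\<bar>\<bar>\<theta> i - \<theta> j\<bar> - real_of_int k / real (p l)\<bar> < d"
    proof -
      have "\<not> (\<forall>i\<in>{1..t}. \<forall>j\<in>{i..t}. \<forall>k::int. \<not> int (p l) dvd k \<longrightarrow>
           \<bar>\<bar>\<theta> i - \<theta> j\<bar> - real_of_int k / real (p l)\<bar> \<ge> d)" using H l unfolding d_def by blast
      then show ?thesis using that by (meson not_le)
    qed
    have "i \<noteq> j"
    proof
      assume "i = j"
      hence lt: "\<bar>real_of_int k\<bar> / real (p l) < d" using ij(4) by (simp add: abs_div_pos)
      have "k \<noteq> 0" using ij(3) by auto
      hence "\<bar>real_of_int k\<bar> \<ge> 1" by linarith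
      hence "1 / real (p l) \<le> \<bar>real_of_int k\<bar> / real (p l)" using pos[OF l]
        by (simp add: divide_right_mono)
      moreover have "d \<le> 1 / real (p l)"
      proof -
        have "real (p l) \<le> 2 * real (p N) * real (p (N+1))"
          using mono1[OF l] pN by (simp add: order_trans[OF _ mult_right_mono[of 1 "2 * real (p N)"]])
        thus ?thesis unfolding d_def using pos[OF l] by (simp add: frac_le)
      qed
      ultimately show False using lt by linarith
    qed
    thus ?thesis using ij by (intro exI[of _ "(i,j)"]) auto
  qed
  obtain g where g: "\<And>l. l \<in> {1..N+1} \<Longrightarrow> 1 \<le> fst (g l) \<and> fst (g l) < snd (g l) \<and> snd (g l) \<le> t \<and> (\<exists>k::int. \<not> int (p l) dvd k \<and>
      \<bar>\<bar>\<theta> (fst (g l)) - \<theta> (snd (g l))\<bar> - real_of_int k / real (p l)\<bar> < d)"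
    using bad by metis
  have inj: "inj_on g {1..N+1}"
  proof (rule inj_onI, rule ccontr)
    have gen: False if l: "l \<in> {1..N+1}" and m: "m \<in> {1..N+1}" and lm: "l < m" and eq: "g l = g m" for l m
    proof -
      obtain k where k: "\<not> int (p l) dvd k" "\<bar>\<bar>\<theta> (fst (g l)) - \<theta> (snd (g l))\<bar> - real_of_int k / real (p l)\<bar> < d"
        using g[OF l] by blast
      obtain k' where k': "\<not> int (p m) dvd k'" "\<bar>\<bar>\<theta> (fst (g l)) - \<theta> (snd (g l))\<bar> - real_of_int k' / real (p m)\<bar> < d"
        using g[OF m] eq by auto
      have "p l < p m" using assms(4) l m lm by blast
      have lN: "l \<in> {1..N}" using l m lm by auto
      have "real (p l) * real (p m) \<le> real (p N) * real (p (N+1))"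
        using mono[OF lN] mono1[OF m] by (simp add: mult_mono flip: of_nat_mult)
      hence "2 * d * real (p l) * real (p m) \<le> 1"
        unfolding d_def using pN pN1 by (simp add: field_simps)
      thus False using key[OF pr[OF l] pr[OF m] _ k(1) k(2) k'(2)] \<open>p l < p m\<close> by simp
    qed
    fix l m assume "l \<in> {1..N+1}" "m \<in> {1..N+1}" "g l = g m" "l \<noteq> m"
    then show False using gen by (metis linorder_neqE_nat)
  qed
  have sub: "g ` {1..N+1} \<subseteq> {(i::nat,j). 1\<le>i \<and> i<j \<and> j\<le>t}"
  proof
    fix x assume "x \<in> g ` {1..N+1}"
    then obtain l where "l \<in> {1..N+1}" "x = g l" by blast
    then show "x \<in> {(i::nat,j). 1\<le>i \<and> i<j \<and> j\<le>t}" using g[of l] by (cases x) auto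
  qed
  have f: "finite {(i::nat,j). 1\<le>i \<and> i<j \<and> j\<le>t}"
    by (rule finite_subset[of _ "{..t} \<times> {..t}"]) auto
  have "N + 1 \<le> card {(i::nat,j). 1\<le>i \<and> i<j \<and> j\<le>t}"
    using card_inj_on_le[OF inj sub f] by simp
  moreover have "card {(i::nat,j). 1\<le>i \<and> i<j \<and> j\<le>t} = N"
    using card_pairs[of t] assms(2) by simp
  ultimately show False by simp
qed

end
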